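(* Let $s$ be an integer and let $G(x,L)=1+\operatorname{sgn}(s)\sum_{n\ge1}\gamma_n(x)L^n$ be a solution of the analytic Dyson-Schwinger equation \[ G(x,L) = 1 + \operatorname{sgn}(s)\sum_{k \geq 1}x^k\,G\!\left(x,\tfrac{d}{d(-\rho)}\right)^{1+sk}(e^{-L\rho}-1)F_{k}(\rho) \Big|_{\rho=0}, \qquad F_k(\rho) = \sum_{i=-1}^{\infty} f_{k,i+1}\rho^i . \] For each $k\ge1$ let $g_k(\rho)$ be a formal Laurent series with real coefficients of the form $g_k(\rho)=\frac{1}{\rho}+O(\rho^0)$. Then there exist unique real numbers $r_k$, $k\geq 1$, such that \[ \sum_{k \geq 1}x^kG\!\left(x,\tfrac{d}{d(-\rho)}\right)^{1+sk}(e^{-L\rho}-1)F_{k}(\rho) \Big|_{\rho=0} = \sum_{k \geq 1}x^kG\!\left(x,\tfrac{d}{d(-\rho)}\right)^{1+sk}(e^{-L\rho}-1)\,r_k\,g_k(\rho) \Big|_{\rho=0} \] as formal series in $x$ and $L$. In particular (taking $g_k(\rho)=1/(\rho(1-\rho))$) each $F_k$ may be replaced by a pure geometric series $r_k/(\rho(1-\rho))$ without any additional correction terms involving higher powers of $L$.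
   Context: $\operatorname{sgn}(s)\in\{-1,0,1\}$ denotes the sign of $s$. The coefficients $f_{k,j}$ are given real numbers, so each $F_k(\rho)$ is a formal Laurent series in $\rho$ with at most a simple pole at $0$. $G(x,L)$ is a formal power series in $x$ and $L$ with constant term $1$, and the $\gamma_n(x)$ are formal power series in $x$ without constant term; powers $G^{m}$ with $m$ a negative integer are formal inverses. Notation: for a formal series $H(x,L)$ with constant term $1$ and an integer $m$, write $H(x,L)^m=\sum_{n\ge0}c_n(x)L^n$; then $H\!\left(x,\frac{d}{d(-\rho)}\right)^{m}(e^{-L\rho}-1)F(\rho)\big|_{\rho=0}$ means $\sum_{n\ge0}c_n(x)\left(-\frac{d}{d\rho}\right)^n\big[(e^{-L\rho}-1)F(\rho)\big]$ evaluated at $\rho=0$, where $(e^{-L\rho}-1)F(\rho)$ is a formal power series in $\rho$ (the factor $e^{-L\rho}-1$ cancels the simple pole) whose coefficients are polynomials in $L$. Here $L$ appearing inside $e^{-L\rho}$ is the variable $L$ of the left-hand side, not the one substituted by the derivative operator. *)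

theory Defs
  imports "HOL-Computational_Algebra.Polynomial" "HOL-Computational_Algebra.Formal_Laurent_Series"
          "HOL-Library.Groups_Big_Fun"
begin

text \<open>Bivariate formal series in x and L are represented as real fps fps:
  the outer variable is L, the coefficients are real power series in x.
  So (P $ b) $ a is the coefficient of x^a L^b.\<close>

text \<open>e^(-L rho) - 1 as a power series in rho with coefficients polynomials in L.\<close>
definition expm1_negL :: "real poly fps" where
  "expm1_negL = Abs_fps (\<lambda>i. if i = 0 then 0 else monom ((-1) ^ i / fact i) i)"

text \<open>(e^(-L rho) - 1) F(rho) for a Laurent series F with at most a simple pole:
  it equals ((e^(-L rho) - 1)/rho) * (rho F(rho)), a power series in rho.\<close>
definition dse_H :: "real fls \<Rightarrow> real poly fps" where
  "dse_H F = fps_shift 1 expm1_negL * Abs_fps (\<lambda>i. [: fls_nth F (int i - 1) :])"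

text \<open>(-d/d rho)^n applied to (e^(-L rho)-1)F(rho), evaluated at rho = 0.\<close>
definition dse_D :: "real fls \<Rightarrow> nat \<Rightarrow> real poly" where
  "dse_D F n = smult ((-1) ^ n * fact n) (dse_H F $ n)"

text \<open>H(x, d/d(-rho))^m (e^(-L rho)-1) F(rho) at rho = 0, where H^m = sum_n c_n(x) L^n:
  the result is sum_n c_n(x) * dse_D F n; the coefficient of x^a L^b is a formal
  (finitely supported) sum over n.\<close>
definition dse_op :: "real fps fps \<Rightarrow> int \<Rightarrow> real fls \<Rightarrow> real fps fps" where
  "dse_op H m F = Abs_fps (\<lambda>b. Abs_fps (\<lambda>a.
      Sum_any (\<lambda>n. ((H powi m) $ n) $ a * coeff (dse_D F n) b)))"

text \<open>sum_{k>=1} x^k H(x, d/d(-rho))^(1+sk) (e^(-L rho)-1) F_k(rho) at rho = 0.\<close>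
definition dse_sum :: "real fps fps \<Rightarrow> int \<Rightarrow> (nat \<Rightarrow> real fls) \<Rightarrow> real fps fps" where
  "dse_sum H s F = Abs_fps (\<lambda>b. Abs_fps (\<lambda>a.
      \<Sum>k = 1..a. (dse_op H (1 + s * int k) (F k) $ b) $ (a - k)))"

end

theory Submission
  imports Defs
begin

lemma deriv_pow:
  fixes d :: "'a::comm_ring_1 \<Rightarrow> 'a"
  assumes pr: "\<And>x y. d (x*y) = x * d y + d x * y"
  shows "x * d (x^n) = of_nat n * x^n * d x"
proof (induction n)
  case 0
  have "d 1 = d (1*1)" by simp
  also have "\<dots> = d 1 + d 1" using pr[of 1 1] by simp
  finally have "d 1 = 0" by simp
  then show ?case by simp
next
  case (Suc n)
  have "x * d (x^Suc n) = x * (x * d (x^n)) + x^Suc n * d x"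
    using pr[of x "x^n"] by (simp add: algebra_simps)
  also have "\<dots> = of_nat (Suc n) * x^Suc n * d x" unfolding Suc.IH by (simp add: algebra_simps)
  finally show ?case .
qed

lemma deriv_powi:
  fixes d :: "'a::{comm_ring_1,inverse} \<Rightarrow> 'a"
  assumes pr: "\<And>x y. d (x*y) = x * d y + d x * y"
    and inv: "x * inverse x = 1"
  shows "x * d (x powi m) = of_int m * x powi m * d x"
proof (cases "m \<ge> 0")
  case True
  then show ?thesis using deriv_pow[OF pr, of x "nat m"] by (simp add: power_int_def)
next
  case False
  define I where "I = inverse x"
  define n where "n = nat (-m)"
  have m: "m = - of_nat n" using False n_def by simp
  have d1: "d 1 = 0"
  proof -
    have "d 1 = d (1*1)" by simp
    also have "\<dots> = d 1 + d 1" using pr[of 1 1] by simp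
    finally show ?thesis by simp
  qed
  have xI: "x * I = 1" using inv I_def by simp
  have "0 = d (x * I)" using xI d1 by simp
  then have "x * d I + d x * I = 0" using pr[of x I] by simp
  then have dI: "x * d I = - (I * d x)" by (simp add: eq_neg_iff_add_eq_0 mult.commute)
  have pI: "I * d (I^n) = of_nat n * I^n * d I" by (rule deriv_pow[OF pr])
  have "x * d (I^n) = x * x * I * d (I^n)" by (metis xI mult.assoc mult_1_right)
  also have "\<dots> = x * x * (I * d (I^n))" by (simp only: mult.assoc)
  also have "\<dots> = of_nat n * I^n * (x * d I) * x" unfolding pI by (simp only: ac_simps)
  also have "\<dots> = - (of_nat n * I^n * (x * I) * d x)" unfolding dI by (simp only: mult_minus_right mult_minus_left ac_simps)
  also have "\<dots> = - (of_nat n * I^n * d x)" unfolding xI by simp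
  finally have fin: "x * d (I^n) = - (of_nat n * I^n * d x)" .
  have p: "x powi m = I^n" using False by (simp add: power_int_def I_def n_def)
  have q: "(of_int m :: 'a) = - of_nat n" using m by simp
  show ?thesis unfolding p q fin by simp
qed

lemma bi_mult_nth: "((V * W :: real fps fps) $ n) $ a = (\<Sum>j=0..n. \<Sum>i=0..a. V$j$i * W$(n-j)$(a-i))"
  by (simp add: fps_mult_nth fps_sum_nth)

definition dl :: "int \<Rightarrow> real fps fps \<Rightarrow> real fps fps" where
  "dl s V = Abs_fps (\<lambda>b. Abs_fps (\<lambda>a. of_int s * of_nat a * V$b$a))"

lemma dl_nth[simp]: "dl s V $ b $ a = of_int s * of_nat a * V$b$a"
  by (simp add: dl_def)

lemma dl_mult: "dl s (V * W) = V * dl s W + dl s V * W"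
proof (intro fps_ext)
  fix b a
  have "dl s (V * W) $ b $ a = (\<Sum>j=0..b. \<Sum>i=0..a. of_int s * of_nat a * (V$j$i * W$(b-j)$(a-i)))"
    by (simp add: bi_mult_nth sum_distrib_left)
  also have "\<dots> = (\<Sum>j=0..b. \<Sum>i=0..a. V$j$i * (of_int s * of_nat (a-i) * W$(b-j)$(a-i)) + of_int s * of_nat i * V$j$i * W$(b-j)$(a-i))"
    by (intro sum.cong refl) (simp add: of_nat_diff algebra_simps)
  also have "\<dots> = (V * dl s W + dl s V * W) $ b $ a"
    by (simp add: bi_mult_nth sum.distrib)
  finally show "dl s (V * W) $ b $ a = (V * dl s W + dl s V * W) $ b $ a" .
qed

definition lfin :: "real fps fps \<Rightarrow> bool" where
  "lfin V \<longleftrightarrow> (\<forall>a. \<exists>N. \<forall>n\<ge>N. \<forall>i\<le>a. V$n$i = 0)"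

definition lone :: "real fps fps \<Rightarrow> bool" where
  "lone V \<longleftrightarrow> (\<forall>n. V$n$0 = (if n = 0 then 1 else 0))"

lemma lfin_mult:
  assumes "lfin V" "lfin W" shows "lfin (V * W)"
  unfolding lfin_def
proof
  fix a
  obtain N1 where N1: "\<forall>n\<ge>N1. \<forall>i\<le>a. V$n$i = 0" using assms(1) lfin_def by blast
  obtain N2 where N2: "\<forall>n\<ge>N2. \<forall>i\<le>a. W$n$i = 0" using assms(2) lfin_def by blast
  have "\<forall>n\<ge>N1+N2. \<forall>i\<le>a. (V*W)$n$i = 0"
  proof (intro allI impI)
    fix n i assume n: "n \<ge> N1+N2" and i: "i \<le> a"
    have "\<And>j i'. j \<in> {0..n} \<Longrightarrow> i' \<in> {0..i} \<Longrightarrow> V$j$i' * W$(n-j)$(i-i') = 0"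
    proof -
      fix j i' assume "j \<in> {0..n}" "i' \<in> {0..i}"
      then show "V$j$i' * W$(n-j)$(i-i') = 0"
        using N1 N2 n i by (cases "j \<ge> N1") auto
    qed
    then show "(V*W)$n$i = 0" unfolding bi_mult_nth by (intro sum.neutral ballI; assumption)
  qed
  then show "\<exists>N. \<forall>n\<ge>N. \<forall>i\<le>a. (V*W)$n$i = 0" by blast
qed

lemma lfin_const: "lfin (fps_const c)"
  unfolding lfin_def by (intro allI exI[of _ 1]) auto

lemma lfin_one: "lfin 1"
  unfolding lfin_def by (intro allI exI[of _ 1]) auto

lemma lfin_add: assumes "lfin V" "lfin W" shows "lfin (V + W)"
  unfolding lfin_def
proof
  fix a
  obtain N1 where N1: "\<forall>n\<ge>N1. \<forall>i\<le>a. V$n$i = 0" using assms(1) lfin_def by blast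
  obtain N2 where N2: "\<forall>n\<ge>N2. \<forall>i\<le>a. W$n$i = 0" using assms(2) lfin_def by blast
  show "\<exists>N. \<forall>n\<ge>N. \<forall>i\<le>a. (V+W)$n$i = 0" using N1 N2 by (intro exI[of _ "N1+N2"]) auto
qed

lemma lfin_diff: assumes "lfin V" "lfin W" shows "lfin (V - W)"
  unfolding lfin_def
proof
  fix a
  obtain N1 where N1: "\<forall>n\<ge>N1. \<forall>i\<le>a. V$n$i = 0" using assms(1) lfin_def by blast
  obtain N2 where N2: "\<forall>n\<ge>N2. \<forall>i\<le>a. W$n$i = 0" using assms(2) lfin_def by blast
  show "\<exists>N. \<forall>n\<ge>N. \<forall>i\<le>a. (V-W)$n$i = 0" using N1 N2 by (intro exI[of _ "N1+N2"]) auto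
qed

lemma lfin_power: "lfin V \<Longrightarrow> lfin (V^n)"
  by (induction n) (auto intro: lfin_mult lfin_one)

lemma of_nat_fps_nth[simp]: "((of_nat k :: real fps) * p) $ i = of_nat k * p $ i"
  by (metis fps_of_nat fps_mult_left_const_nth)

lemma bi_deriv_nth[simp]: "fps_deriv (V::real fps fps) $ n $ i = of_nat (n+1) * V$(n+1)$i"
  by (simp only: fps_deriv_nth of_nat_fps_nth)

declare fps_deriv_nth[simp del]

lemma lfin_deriv: assumes "lfin V" shows "lfin (fps_deriv V)"
  unfolding lfin_def
proof
  fix a
  obtain N1 where N1: "\<forall>n\<ge>N1. \<forall>i\<le>a. V$n$i = 0" using assms(1) lfin_def by blast
  show "\<exists>N. \<forall>n\<ge>N. \<forall>i\<le>a. fps_deriv V$n$i = 0" using N1 by (intro exI[of _ "N1"]) auto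
qed

lemma lfin_dl: assumes "lfin V" shows "lfin (dl s V)"
  unfolding lfin_def
proof
  fix a
  obtain N1 where N1: "\<forall>n\<ge>N1. \<forall>i\<le>a. V$n$i = 0" using assms(1) lfin_def by blast
  show "\<exists>N. \<forall>n\<ge>N. \<forall>i\<le>a. dl s V$n$i = 0" using N1 by (intro exI[of _ "N1"]) auto
qed

lemma lone_mult: assumes "lone V" "lone W" shows "lone (V * W)"
  unfolding lone_def
proof
  fix n
  have "(V*W)$n$0 = (\<Sum>j=0..n. V$j$0 * W$(n-j)$0)" by (simp add: bi_mult_nth)
  also have "\<dots> = (\<Sum>j=0..n. if j = 0 then (if n = 0 then 1 else 0) else 0)"
    using assms by (intro sum.cong refl) (auto simp: lone_def)
  also have "\<dots> = (if n = 0 then 1 else 0)" by simp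
  finally show "(V*W)$n$0 = (if n = 0 then 1 else 0)" .
qed

lemma lone_one: "lone 1" by (simp add: lone_def)

lemma lone_power: "lone V \<Longrightarrow> lone (V^n)"
  by (induction n) (auto intro: lone_mult lone_one)

lemma inv_props:
  fixes G :: "real fps fps"
  assumes lG: "lone G" and fG: "lfin G"
  shows "G * inverse G = 1" "lone (inverse G)" "lfin (inverse G)"
proof -
  have G00: "G $ 0 $ 0 = 1" using lG unfolding lone_def by simp
  have G0: "G $ 0 * inverse (G $ 0) = 1" by (rule inverse_mult_eq_1') (simp add: G00)
  show GI: "G * inverse G = 1"
    using fps_right_inverse[of G "inverse (G$0)", OF G0] by (simp add: fps_inverse_def)
  define I where "I = inverse G"
  define H where "H = 1 - G"
  have H0: "H$n$0 = 0" for n using lG by (simp add: H_def lone_def)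
  have fH: "lfin H" unfolding H_def by (intro lfin_diff lfin_one fG)
  have Ieq: "I = 1 + H * I" using GI unfolding I_def H_def by (simp add: algebra_simps)
  have Inth: "I$n$i = (1::real fps fps)$n$i + (\<Sum>j=0..n. \<Sum>i'=0..i. H$j$i' * I$(n-j)$(i-i'))" for n i
  proof -
    have "I$n$i = (1 + H*I)$n$i" using Ieq by (rule arg_cong)
    then show ?thesis by (simp add: bi_mult_nth)
  qed
  have I0: "I$n$0 = (if n = 0 then 1 else 0)" for n
    using Inth[of n 0] H0 by simp
  from I0 show "lone (inverse G)" unfolding lone_def I_def by simp
  have "\<exists>N. \<forall>n\<ge>N. \<forall>i\<le>a. I$n$i = 0" for a
  proof (induction a)
    case 0
    show ?case by (intro exI[of _ 1]) (auto simp: I0)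
  next
    case (Suc a)
    then obtain N1 where N1: "\<forall>n\<ge>N1. \<forall>i\<le>a. I$n$i = 0" by blast
    obtain N2 where N2: "\<forall>n\<ge>N2. \<forall>i\<le>Suc a. H$n$i = 0" using fH lfin_def by blast
    have "\<forall>n\<ge>N1+N2+1. \<forall>i\<le>Suc a. I$n$i = 0"
    proof (intro allI impI)
      fix n i assume n: "n \<ge> N1+N2+1" and i: "i \<le> Suc a"
      have "\<And>j i'. j \<in> {0..n} \<Longrightarrow> i' \<in> {0..i} \<Longrightarrow> H$j$i' * I$(n-j)$(i-i') = 0"
      proof -
        fix j i' assume j: "j \<in> {0..n}" and i': "i' \<in> {0..i}"
        show "H$j$i' * I$(n-j)$(i-i') = 0"
        proof (cases "i' = 0")
          case True then show ?thesis using H0 by simp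
        next
          case False
          then have "i - i' \<le> a" using i i' by auto
          then show ?thesis using N1 N2 n i i' j by (cases "j \<ge> N2") auto
        qed
      qed
      then have "(\<Sum>j=0..n. \<Sum>i'=0..i. H$j$i' * I$(n-j)$(i-i')) = 0" by (intro sum.neutral ballI; assumption)
      moreover have "(1::real fps fps)$n$i = 0" using n by simp
      ultimately show "I$n$i = 0" using Inth[of n i] by simp
    qed
    then show ?case by blast
  qed
  then show "lfin (inverse G)" unfolding lfin_def I_def by blast
qed

lemma powi_props:
  fixes G :: "real fps fps"
  assumes lG: "lone G" and fG: "lfin G"
  shows "lone (G powi m)" "lfin (G powi m)"
  using inv_props[OF assms] lG fG
  by (auto simp: power_int_def intro: lone_power lfin_power)


lemma Sum_any_bound:
  fixes f :: "nat \<Rightarrow> real"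
  assumes "\<And>n. N \<le> n \<Longrightarrow> f n = 0"
  shows "Sum_any f = (\<Sum>n<N. f n)"
proof -
  have "{a. f a \<noteq> 0} \<subseteq> {..<N}" using assms by (auto simp: not_less[symmetric])
  then show ?thesis by (intro Sum_any.expand_superset) auto
qed

lemma coeff_dseH:
  "coeff (dse_H F $ n) b = (if 1 \<le> b \<and> b \<le> n+1 then (-1)^b / fact b * fls_nth F (int (n+1-b) - 1) else 0)"
proof -
  have "coeff (dse_H F $ n) b =
     (\<Sum>j=0..n. if j = b - 1 \<and> 1 \<le> b then (-1)^b / fact b * fls_nth F (int (n+1-b) - 1) else 0)"
    unfolding dse_H_def fps_mult_nth coeff_sum
    by (intro sum.cong refl) (auto simp: expm1_negL_def)
  also have "\<dots> = (if 1 \<le> b \<and> b \<le> n+1 then (-1)^b / fact b * fls_nth F (int (n+1-b) - 1) else 0)"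
    by (auto simp: sum.delta)
  finally show ?thesis .
qed

definition wf :: "real fls \<Rightarrow> nat \<Rightarrow> nat \<Rightarrow> real" where
  "wf F n b = (if b \<le> n then - ((-1)^(n-b) * fact n / fact b * fls_nth F (int (n-b) - 1)) else 0)"

lemma coeff_dseD0: "coeff (dse_D F n) 0 = 0"
  by (simp add: dse_D_def coeff_dseH)

lemma coeff_dseD_Suc: "of_nat (b+1) * coeff (dse_D F n) (b+1) = wf F n b"
proof (cases "b \<le> n")
  case True
  have e: "(-1::real)^n = (-1)^(n-b) * (-1)^b" using True by (simp flip: power_add)
  have f: "fact (b+1) = (of_nat (b+1) :: real) * fact b" by simp
  have "of_nat (b+1) * coeff (dse_D F n) (b+1) =
      of_nat (b+1) * ((-1)^n * fact n * ((-1)^(b+1) / fact (b+1) * fls_nth F (int (n-b) - 1)))"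
    using True by (simp add: dse_D_def coeff_dseH)
  also have "\<dots> = wf F n b" using True unfolding e f wf_def
    by (simp add: field_simps del: of_nat_Suc)
  finally show ?thesis .
qed (simp add: dse_D_def coeff_dseH wf_def)

lemma wf_shift: "of_nat (b+1) * wf F n (b+1) = of_nat n * wf F (n-1) b"
proof (cases "b + 1 \<le> n")
  case True
  then obtain m where n: "n = Suc m" by (cases n) auto
  have f: "fact (b+1) = (of_nat (b+1) :: real) * fact b" by simp
  have g: "fact n = (of_nat n :: real) * fact m" using n by simp
  have h: "n - (b+1) = m - b" "n - 1 = m" using n by auto
  show ?thesis using True unfolding wf_def h f g n
    by (simp add: field_simps del: of_nat_Suc)
next
  case False
  then show ?thesis by (cases n) (auto simp: wf_def)
qed


definition Xk :: "nat \<Rightarrow> real fps fps" where "Xk k = fps_const (fps_X ^ k)"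

lemma Xk_nth[simp]: "(Xk k * P) $ n $ a = (if a < k then 0 else P$n$(a-k))"
  by (simp add: Xk_def fps_X_power_mult_nth)

definition Uf :: "real fps fps \<Rightarrow> int \<Rightarrow> nat \<Rightarrow> real fps fps" where
  "Uf G s k = Xk k * G powi (1 + s * int k)"

definition Mop :: "(nat \<Rightarrow> real fls) \<Rightarrow> (nat \<Rightarrow> real fps fps) \<Rightarrow> real fps fps" where
  "Mop F V = Abs_fps (\<lambda>b. Abs_fps (\<lambda>a. \<Sum>k=1..a. Sum_any (\<lambda>n. V k $ n $ a * wf (F k) n b)))"

lemma Mop_nth: "Mop F V $ b $ a = (\<Sum>k=1..a. Sum_any (\<lambda>n. V k $ n $ a * wf (F k) n b))"
  by (simp add: Mop_def)

lemma dse_sum_nth: "dse_sum H s F $ b $ a =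
   (\<Sum>k=1..a. Sum_any (\<lambda>n. (H powi (1 + s*int k))$n$(a-k) * coeff (dse_D (F k) n) b))"
  by (simp add: dse_sum_def dse_op_def)

lemma dse_sum0: "dse_sum H s F $ 0 = 0"
  by (intro fps_ext) (simp add: dse_sum_nth coeff_dseD0)

lemma lfin_family:
  assumes "\<forall>k. lfin (V k)"
  shows "\<exists>N. \<forall>k\<le>a. \<forall>n\<ge>N. \<forall>i\<le>a. V k $n$i = 0"
proof -
  from assms have "\<forall>k. \<exists>N. \<forall>n\<ge>N. \<forall>i\<le>a. V k $n$i = 0" unfolding lfin_def by blast
  then obtain Nf where Nf: "\<And>k. \<forall>n\<ge>Nf k. \<forall>i\<le>a. V k $n$i = 0" by metis
  have "\<forall>k\<le>a. \<forall>n\<ge>(\<Sum>k\<le>a. Nf k). \<forall>i\<le>a. V k $n$i = 0"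
  proof (intro allI impI)
    fix k n i assume k: "k \<le> a" and n: "n \<ge> (\<Sum>k\<le>a. Nf k)" and i: "i \<le> a"
    have "Nf k \<le> (\<Sum>k\<le>a. Nf k)" using k by (intro member_le_sum) auto
    then show "V k $n$i = 0" using Nf n i by auto
  qed
  then show ?thesis by blast
qed

lemma DA:
  assumes lG: "lone G" and fG: "lfin G"
  shows "fps_deriv (dse_sum G s F) = Mop F (Uf G s)"
proof (intro fps_ext)
  fix b a
  have "of_nat (b+1) * Sum_any (\<lambda>n. (G powi (1 + s*int k))$n$(a-k) * coeff (dse_D (F k) n) (b+1))
      = Sum_any (\<lambda>n. Uf G s k $ n $ a * wf (F k) n b)" if k: "k \<in> {1..a}" for k
  proof -
    define P where "P = G powi (1 + s*int k)"
    have "lfin P" unfolding P_def using powi_props[OF lG fG] by blast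
    then obtain N where N: "\<forall>n\<ge>N. \<forall>i\<le>a. P$n$i = 0" unfolding lfin_def by blast
    have "of_nat (b+1) * Sum_any (\<lambda>n. P$n$(a-k) * coeff (dse_D (F k) n) (b+1))
        = of_nat (b+1) * (\<Sum>n<N. P$n$(a-k) * coeff (dse_D (F k) n) (b+1))"
      using N by (subst Sum_any_bound[of N]) auto
    also have "\<dots> = (\<Sum>n<N. P$n$(a-k) * wf (F k) n b)"
      by (simp add: sum_distrib_left coeff_dseD_Suc[symmetric] algebra_simps del: of_nat_Suc)
    also have "\<dots> = Sum_any (\<lambda>n. Uf G s k $ n $ a * wf (F k) n b)"
      using N k by (subst Sum_any_bound[of N]) (auto simp: Uf_def P_def)
    finally show ?thesis unfolding P_def .
  qed
  then show "fps_deriv (dse_sum G s F) $ b $ a = Mop F (Uf G s) $ b $ a"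
    by (simp add: dse_sum_nth Mop_nth sum_distrib_left del: of_nat_Suc)
qed

lemma Mop_deriv:
  assumes fV: "\<forall>k. lfin (V k)"
  shows "fps_deriv (Mop F V) = Mop F (\<lambda>k. fps_deriv (V k))"
proof (intro fps_ext)
  fix b a
  obtain N where N: "\<forall>k\<le>a. \<forall>n\<ge>N. \<forall>i\<le>a. V k $n$i = 0" using lfin_family[OF fV] by blast
  have "of_nat (b+1) * Sum_any (\<lambda>n. V k $ n $ a * wf (F k) n (b+1))
     = Sum_any (\<lambda>n. fps_deriv (V k) $ n $ a * wf (F k) n b)" if k: "k \<in> {1..a}" for k
  proof -
    have "of_nat (b+1) * Sum_any (\<lambda>n. V k $ n $ a * wf (F k) n (b+1))
       = of_nat (b+1) * (\<Sum>n<Suc N. V k $ n $ a * wf (F k) n (b+1))"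
      using N k by (subst Sum_any_bound[of "Suc N"]) auto
    also have "\<dots> = (\<Sum>n<Suc N. V k $ n $ a * (of_nat n * wf (F k) (n-1) b))"
      unfolding sum_distrib_left by (intro sum.cong refl) (metis wf_shift mult.left_commute)
    also have "\<dots> = (\<Sum>n<N. V k $ (n+1) $ a * (of_nat (n+1) * wf (F k) n b))"
      by (subst sum.lessThan_Suc_shift) simp
    also have "\<dots> = Sum_any (\<lambda>n. fps_deriv (V k) $ n $ a * wf (F k) n b)"
      using N k by (subst Sum_any_bound[of N]) (auto simp: algebra_simps)
    finally show ?thesis .
  qed
  then show "fps_deriv (Mop F V) $ b $ a = Mop F (\<lambda>k. fps_deriv (V k)) $ b $ a"
    by (simp add: Mop_nth sum_distrib_left del: of_nat_Suc)
qed

lemma Mop_diff: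
  assumes fV: "\<forall>k. lfin (V k)" and fW: "\<forall>k. lfin (W k)"
  shows "Mop F V - Mop F W = Mop F (\<lambda>k. V k - W k)"
proof (intro fps_ext)
  fix b a
  obtain N1 where N1: "\<forall>k\<le>a. \<forall>n\<ge>N1. \<forall>i\<le>a. V k $n$i = 0" using lfin_family[OF fV] by blast
  obtain N2 where N2: "\<forall>k\<le>a. \<forall>n\<ge>N2. \<forall>i\<le>a. W k $n$i = 0" using lfin_family[OF fW] by blast
  have hk: "Sum_any (\<lambda>n. V k $ n $ a * wf (F k) n b) - Sum_any (\<lambda>n. W k $ n $ a * wf (F k) n b)
     = Sum_any (\<lambda>n. (V k $ n $ a - W k $ n $ a) * wf (F k) n b)" if k: "k \<in> {1..a}" for k
    using N1 N2 k
    by (subst (1 2 3) Sum_any_bound[of "N1+N2"]) (auto simp: sum_subtractf algebra_simps)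
  show "(Mop F V - Mop F W) $ b $ a = Mop F (\<lambda>k. V k - W k) $ b $ a"
    unfolding Mop_nth fps_sub_nth sum_subtractf[symmetric] by (intro sum.cong refl hk)
qed

definition ordge :: "real fps fps \<Rightarrow> nat \<Rightarrow> bool" where
  "ordge V t \<longleftrightarrow> (\<forall>n a. a < t \<longrightarrow> V$n$a = 0)"

lemma Mop_ordge: "\<forall>k\<ge>1. ordge (V k) t \<Longrightarrow> ordge (Mop F V) t"
  by (simp add: ordge_def Mop_nth)


definition EE :: "real fps \<Rightarrow> int \<Rightarrow> real fps fps \<Rightarrow> real fps fps" where
  "EE c s V = fps_const c * (V + dl s V)"

lemma EE_nth: "EE c s V $ b $ a = (\<Sum>j=0..a. c$j * ((1 + of_int s * of_nat (a-j)) * V$b$(a-j)))"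
  by (simp only: EE_def fps_mult_left_const_nth, simp only: fps_mult_nth)
    (intro sum.cong refl, simp add: algebra_simps)

lemma EE_deriv: "fps_deriv (EE c s V) = EE c s (fps_deriv V)"
proof -
  have "fps_deriv (dl s V) = dl s (fps_deriv V)"
    by (intro fps_ext) (simp add: algebra_simps)
  then show ?thesis by (simp add: EE_def)
qed

lemma dl_diff: "dl s (V - W) = dl s V - dl s W"
  by (intro fps_ext) (simp add: algebra_simps)

lemma EE_diff: "EE c s (V - W) = EE c s V - EE c s W"
  by (simp add: EE_def dl_diff algebra_simps)

lemma dl_of_int: "dl s (of_int z * V) = of_int z * dl s V"
proof -
  have "dl s (of_int z) = 0"
    by (intro fps_ext) (simp flip: fps_of_int)
  moreover have "dl s (of_int z * V) = of_int z * dl s V + dl s (of_int z) * V" by (rule dl_mult)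
  ultimately show ?thesis by simp
qed

lemma EE_of_int: "EE c s (of_int z * V) = of_int z * EE c s V"
  unfolding EE_def dl_of_int by (simp add: algebra_simps)

lemma lfin_EE: "lfin V \<Longrightarrow> lfin (EE c s V)"
  unfolding EE_def by (intro lfin_mult lfin_const lfin_add lfin_dl)

lemma Mop_EE:
  assumes fV: "\<forall>k. lfin (V k)" and oV: "\<forall>k n i. i < k \<longrightarrow> V k $ n $ i = 0"
  shows "EE c s (Mop F V) = Mop F (\<lambda>k. EE c s (V k))"
proof (intro fps_ext)
  fix b a
  obtain N where N: "\<forall>k\<le>a. \<forall>n\<ge>N. \<forall>i\<le>a. V k $n$i = 0" using lfin_family[OF fV] by blast
  define T where "T j k n = c$j * ((1 + of_int s * of_nat (a-j)) * (V k $ n $ (a-j) * wf (F k) n b))" for j k n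
  have "EE c s (Mop F V) $ b $ a = (\<Sum>j=0..a. \<Sum>k=1..a-j. \<Sum>n<N. T j k n)"
    unfolding EE_nth Mop_nth
  proof (intro sum.cong refl)
    fix j assume j: "j \<in> {0..a}"
    have "(\<Sum>k = 1..a - j. Sum_any (\<lambda>n. V k $ n $ (a - j) * wf (F k) n b)) =
          (\<Sum>k = 1..a - j. \<Sum>n<N. V k $ n $ (a - j) * wf (F k) n b)"
      using N j by (intro sum.cong refl, subst Sum_any_bound[of N]) auto
    then show "c $ j * ((1 + of_int s * of_nat (a - j)) *
          (\<Sum>k = 1..a - j. Sum_any (\<lambda>n. V k $ n $ (a - j) * wf (F k) n b))) =
          (\<Sum>k = 1..a - j. \<Sum>n<N. T j k n)"
      by (simp add: T_def sum_distrib_left)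
  qed
  also have "\<dots> = (\<Sum>j=0..a. \<Sum>k=1..a. \<Sum>n<N. T j k n)"
  proof (rule sum.cong[OF refl])
    fix j assume j: "j \<in> {0..a}"
    show "(\<Sum>k=1..a-j. \<Sum>n<N. T j k n) = (\<Sum>k=1..a. \<Sum>n<N. T j k n)"
      by (rule sum.mono_neutral_left; auto simp: T_def oV)
  qed
  also have "\<dots> = (\<Sum>k=1..a. \<Sum>j=0..a. \<Sum>n<N. T j k n)"
    by (rule sum.swap)
  also have "\<dots> = (\<Sum>k=1..a. \<Sum>n<N. \<Sum>j=0..a. T j k n)"
    by (rule sum.cong[OF refl]) (rule sum.swap)
  also have "\<dots> = Mop F (\<lambda>k. EE c s (V k)) $ b $ a"
    unfolding Mop_nth
  proof (intro sum.cong refl)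
    fix k assume k: "k \<in> {1..a}"
    have hN: "Sum_any (\<lambda>n. EE c s (V k) $ n $ a * wf (F k) n b) = (\<Sum>n<N. EE c s (V k) $ n $ a * wf (F k) n b)"
      using N k by (subst Sum_any_bound[of N]) (auto simp: EE_nth)
    show "(\<Sum>n<N. \<Sum>j=0..a. T j k n) = Sum_any (\<lambda>n. EE c s (V k) $ n $ a * wf (F k) n b)"
      unfolding hN unfolding EE_nth T_def sum_distrib_right by (intro sum.cong refl) (simp add: algebra_simps)
  qed
  finally show "EE c s (Mop F V) $ b $ a = Mop F (\<lambda>k. EE c s (V k)) $ b $ a" .
qed


lemma of_int_bi_nth[simp]: "((of_int z :: real fps fps) * V) $ n $ a = of_int z * V$n$a"
  by (metis fps_of_int fps_mult_left_const_nth)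

lemma key_alg:
  fixes G :: "real fps fps"
  assumes GI: "G * inverse G = 1"
  shows "G * (fps_deriv (Uf G s k) - EE c s (Uf G s k))
       = Xk k * (of_int (1 + s*int k) * (G powi (1 + s*int k) * (fps_deriv G - EE c s G)))"
proof -
  define m where "m = 1 + s * int k"
  define P where "P = G powi m"
  define X where "X = Xk k"
  define C where "C = (fps_const c :: real fps fps)"
  define z where "z = (of_int (s * int k) :: real fps fps)"
  have hD: "G * fps_deriv P = of_int m * P * fps_deriv G"
    unfolding P_def by (rule deriv_powi[OF fps_deriv_mult GI])
  have hdl: "G * dl s P = of_int m * P * dl s G"
    unfolding P_def by (rule deriv_powi[OF _ GI]) (rule dl_mult)
  have dX: "fps_deriv X = 0" by (simp add: X_def Xk_def)
  have dlX: "dl s X = z * X"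
    unfolding z_def by (intro fps_ext) (simp only: of_int_bi_nth dl_nth, simp add: X_def Xk_def fps_X_power_nth)
  have meq: "(of_int m :: real fps fps) = 1 + z" by (simp add: m_def z_def)
  have 1: "fps_deriv (X * P) = X * fps_deriv P" by (simp add: dX)
  have 2: "dl s (X * P) = X * dl s P + z * X * P" by (simp add: dl_mult dlX)
  have "G * (fps_deriv (X * P) - EE c s (X * P))
      = X * (G * fps_deriv P) - C * (X * (G * P) + X * (G * dl s P) + z * X * (G * P))"
    unfolding 1 EE_def 2 C_def by (simp add: algebra_simps)
  also have "\<dots> = X * (of_int m * P * fps_deriv G) - C * (X * (G * P) + X * (of_int m * P * dl s G) + z * X * (G * P))"
    unfolding hD hdl ..
  also have "\<dots> = X * (of_int m * (P * (fps_deriv G - C * (G + dl s G))))"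
    unfolding meq by (simp add: algebra_simps)
  finally show ?thesis unfolding X_def P_def m_def Uf_def EE_def C_def .
qed


lemma ordge_mult_right: "ordge R t \<Longrightarrow> ordge (W * R) t"
  unfolding ordge_def bi_mult_nth by (auto intro!: sum.neutral)

lemma ordge_Xk: "ordge V t \<Longrightarrow> ordge (Xk k * V) (t + k)"
  unfolding ordge_def by auto

lemma ordge_of_int: "ordge V t \<Longrightarrow> ordge (of_int z * V) t"
  unfolding ordge_def by simp

lemma ordge_mono: "t' \<le> t \<Longrightarrow> ordge V t \<Longrightarrow> ordge V t'"
  unfolding ordge_def by auto

lemma ordge_cancel:
  assumes lG: "lone G" and h: "ordge (G * Z) t"
  shows "ordge Z t"
  using h
proof (induction t)
  case 0 then show ?case by (simp add: ordge_def)
next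
  case (Suc t)
  then have IH: "ordge Z t" using ordge_mono[of t "Suc t"] by auto
  have "Z$n$t = 0" for n
  proof -
    have "(G*Z)$n$t = (\<Sum>j=0..n. \<Sum>i=0..t. G$j$i * Z$(n-j)$(t-i))" by (rule bi_mult_nth)
    also have "\<dots> = (\<Sum>j=0..n. if j = 0 then Z$n$t else 0)"
    proof (rule sum.cong[OF refl])
      fix j assume j: "j \<in> {0..n}"
      have "(\<Sum>i=0..t. G$j$i * Z$(n-j)$(t-i)) = (\<Sum>i\<in>{0}. G$j$i * Z$(n-j)$(t-i))"
        using IH by (intro sum.mono_neutral_right) (auto simp: ordge_def)
      then show "(\<Sum>i=0..t. G$j$i * Z$(n-j)$(t-i)) = (if j = 0 then Z$n$t else 0)"
        using lG by (simp add: lone_def)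
    qed
    also have "\<dots> = Z$n$t" by simp
    finally show ?thesis using Suc.prems by (simp add: ordge_def)
  qed
  then show ?case using IH by (auto simp: ordge_def less_Suc_eq)
qed

lemma flow_zero:
  assumes d: "fps_deriv Y = EE c s Y" and y0: "Y $ 0 = 0"
  shows "Y = 0"
proof -
  have "Y $ n = 0" for n
  proof (induction n)
    case 0 then show ?case by (rule y0)
  next
    case (Suc n)
    show ?case
    proof (intro fps_ext)
      fix a
      have "of_nat (n+1) * Y$(n+1)$a = EE c s Y $ n $ a"
        using arg_cong[OF d, of "\<lambda>V. V$n$a"] by simp
      also have "\<dots> = 0" using Suc by (simp add: EE_nth)
      finally show "Y $ Suc n $ a = 0 $ a" by simp
    qed
  qed
  then show ?thesis by (intro fps_ext) simp
qed

lemma deriv_eq: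
  fixes A B :: "real fps fps"
  assumes "fps_deriv A = fps_deriv B" "A $ 0 = B $ 0"
  shows "A = B"
proof (intro fps_ext)
  fix n a
  show "A $ n $ a = B $ n $ a"
  proof (cases n)
    case 0 then show ?thesis using assms by simp
  next
    case (Suc m)
    have "of_nat (m+1) * A$(m+1)$a = of_nat (m+1) * B$(m+1)$a"
      using arg_cong[OF assms(1), of "\<lambda>V. V$m$a"] by simp
    then show ?thesis using Suc by simp
  qed
qed

lemma deriv_of_int_mult: "fps_deriv ((of_int z :: real fps fps) * V) = of_int z * fps_deriv V"
  by (simp flip: fps_of_int)

lemma lfin_Uf: "lone G \<Longrightarrow> lfin G \<Longrightarrow> lfin (Uf G s k)"
  unfolding Uf_def Xk_def by (intro lfin_mult lfin_const) (use powi_props in blast)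

lemma ord_Uf: "\<forall>k n i. i < k \<longrightarrow> Uf G s k $ n $ i = 0"
  by (simp add: Uf_def)

lemma RGE:
  fixes G :: "real fps fps"
  assumes lG: "lone G" and fG: "lfin G" and G0: "G $ 0 = 1"
    and DG: "fps_deriv G = of_int z * Mop F (Uf G s)"
  shows "fps_deriv G = EE (G$1) s G"
proof -
  define c where "c = G $ 1"
  define R where "R = fps_deriv G - EE c s G"
  define U where "U = Uf G s"
  have GI: "G * inverse G = 1" using inv_props[OF lG fG] by blast
  have fU: "\<forall>k. lfin (U k)" using lfin_Uf[OF lG fG] U_def by blast
  have oU: "\<forall>k n i. i < k \<longrightarrow> U k $ n $ i = 0" using ord_Uf U_def by blast
  have fDU: "\<forall>k. lfin (fps_deriv (U k))" using fU lfin_deriv by blast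
  have fEU: "\<forall>k. lfin (EE c s (U k))" using fU lfin_EE by blast
  have dR: "fps_deriv R = of_int z * Mop F (\<lambda>k. fps_deriv (U k) - EE c s (U k))"
  proof -
    have "fps_deriv R = fps_deriv (fps_deriv G) - EE c s (fps_deriv G)"
      by (simp add: R_def EE_deriv)
    also have "\<dots> = of_int z * (Mop F (\<lambda>k. fps_deriv (U k)) - Mop F (\<lambda>k. EE c s (U k)))"
      unfolding DG deriv_of_int_mult EE_of_int U_def[symmetric]
      using Mop_deriv[OF fU] Mop_EE[OF fU oU] by (simp add: algebra_simps)
    also have "\<dots> = of_int z * Mop F (\<lambda>k. fps_deriv (U k) - EE c s (U k))"
      using Mop_diff[OF fDU fEU] by simp
    finally show ?thesis .
  qed
  have R0: "R $ 0 = 0"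
  proof -
    have "dl s G $ 0 = 0" by (intro fps_ext) (simp add: G0)
    then show ?thesis by (simp add: R_def EE_def G0 c_def fps_deriv_nth)
  qed
  have "ordge R t" for t
  proof (induction t)
    case 0 then show ?case by (simp add: ordge_def)
  next
    case (Suc t)
    have "ordge (fps_deriv (U k) - EE c s (U k)) (Suc t)" if k: "k \<ge> 1" for k
    proof (rule ordge_cancel[OF lG])
      have "ordge (Xk k * (of_int (1 + s*int k) * (G powi (1 + s*int k) * R))) (t + k)"
        by (intro ordge_Xk ordge_of_int ordge_mult_right Suc)
      then have "ordge (Xk k * (of_int (1 + s*int k) * (G powi (1 + s*int k) * R))) (Suc t)"
        using k ordge_mono[of "Suc t" "t + k"] by simp
      then show "ordge (G * (fps_deriv (U k) - EE c s (U k))) (Suc t)"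
        unfolding U_def key_alg[OF GI] R_def c_def .
    qed
    then have "ordge (fps_deriv R) (Suc t)"
      unfolding dR by (intro ordge_of_int Mop_ordge) blast
    then have dR0: "of_nat (m+1) * R$(m+1)$a = 0" if "a < Suc t" for m a
      using that unfolding ordge_def by (metis bi_deriv_nth)
    show ?case unfolding ordge_def
    proof (intro allI impI)
      fix n a assume a: "a < Suc t"
      show "R$n$a = 0"
      proof (cases n)
        case 0 then show ?thesis using R0 by simp
      next
        case (Suc m) then show ?thesis using dR0[OF a, of m] by simp
      qed
    qed
  qed
  then have "R = 0" by (intro fps_ext) (auto simp: ordge_def)
  then show ?thesis unfolding R_def c_def by simp
qed


lemma Uf_flow:
  fixes G :: "real fps fps"
  assumes lG: "lone G" and fG: "lfin G" and rge: "fps_deriv G = EE c s G"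
  shows "fps_deriv (Uf G s k) = EE c s (Uf G s k)"
proof -
  have GI: "G * inverse G = 1" using inv_props[OF lG fG] by blast
  have "G * (fps_deriv (Uf G s k) - EE c s (Uf G s k)) = 0"
    unfolding key_alg[OF GI] rge by simp
  moreover have "G \<noteq> 0"
  proof
    assume "G = 0"
    then have "G $ 0 $ 0 = 0" by simp
    then show False using lG by (simp add: lone_def)
  qed
  ultimately show ?thesis by simp
qed

lemma main_flow:
  fixes G :: "real fps fps"
  assumes lG: "lone G" and fG: "lfin G" and rge: "fps_deriv G = EE c s G"
    and e1: "dse_sum G s F1 $ 1 = dse_sum G s F2 $ 1"
  shows "dse_sum G s F1 = dse_sum G s F2"
proof -
  define U where "U = Uf G s"
  have fU: "\<forall>k. lfin (U k)" using lfin_Uf[OF lG fG] U_def by blast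
  have oU: "\<forall>k n i. i < k \<longrightarrow> U k $ n $ i = 0" using ord_Uf U_def by blast
  have fl: "fps_deriv (U k) = EE c s (U k)" for k unfolding U_def by (rule Uf_flow[OF lG fG rge])
  define Y where "Y = fps_deriv (dse_sum G s F1) - fps_deriv (dse_sum G s F2)"
  have Y: "Y = Mop F1 U - Mop F2 U" unfolding Y_def DA[OF lG fG] U_def ..
  have "fps_deriv Y = Mop F1 (\<lambda>k. fps_deriv (U k)) - Mop F2 (\<lambda>k. fps_deriv (U k))"
    unfolding Y by (simp add: Mop_deriv[OF fU])
  also have "\<dots> = EE c s (Mop F1 U) - EE c s (Mop F2 U)"
    unfolding fl Mop_EE[OF fU oU] ..
  also have "\<dots> = EE c s Y" unfolding Y EE_diff ..
  finally have dY: "fps_deriv Y = EE c s Y" .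
  have "Y $ 0 = 0"
    unfolding Y_def using e1 by (simp add: fps_deriv_nth)
  then have "Y = 0" by (rule flow_zero[OF dY])
  then have "fps_deriv (dse_sum G s F1) = fps_deriv (dse_sum G s F2)" unfolding Y_def by simp
  then show ?thesis by (rule deriv_eq) (simp add: dse_sum0)
qed

definition rest :: "real fps fps \<Rightarrow> int \<Rightarrow> (nat \<Rightarrow> real fls) \<Rightarrow> nat \<Rightarrow> real" where
  "rest G s F a = (\<Sum>k=1..a-1. Sum_any (\<lambda>n. (G powi (1 + s*int k))$n$(a-k) * coeff (dse_D (F k) n) 1))"

lemma rest_cong: "(\<And>k. 1 \<le> k \<Longrightarrow> k < a \<Longrightarrow> F1 k = F2 k) \<Longrightarrow> rest G s F1 a = rest G s F2 a"
  unfolding rest_def by (intro sum.cong refl) auto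

lemma A1_split:
  assumes lG: "lone G" and fG: "lfin G" and a: "a \<ge> 1"
  shows "dse_sum G s F $ 1 $ a = rest G s F a - fls_nth (F a) (-1)"
proof -
  obtain a' where a': "a = Suc a'" using a by (cases a) auto
  have P: "lone (G powi (1 + s*int a))" by (rule powi_props(1)[OF lG fG])
  have "Sum_any (\<lambda>n. (G powi (1 + s*int a))$n$0 * coeff (dse_D (F a) n) 1)
      = (\<Sum>n<1. (G powi (1 + s*int a))$n$0 * coeff (dse_D (F a) n) 1)"
    using P by (intro Sum_any_bound) (simp add: lone_def)
  also have "\<dots> = - fls_nth (F a) (-1)"
    using P by (simp add: lone_def dse_D_def coeff_dseH)
  finally have last: "Sum_any (\<lambda>n. (G powi (1 + s*int a))$n$0 * coeff (dse_D (F a) n) 1) = - fls_nth (F a) (-1)" .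
  show ?thesis
    unfolding dse_sum_nth rest_def a' sum.cl_ivl_Suc using last a' by simp
qed

fun rr :: "real fps fps \<Rightarrow> int \<Rightarrow> (nat \<Rightarrow> real fls) \<Rightarrow> (nat \<Rightarrow> real fls) \<Rightarrow> nat \<Rightarrow> nat \<Rightarrow> real" where
  "rr G s F g 0 = (\<lambda>_. 0)"
| "rr G s F g (Suc a) = (rr G s F g a)(Suc a :=
      rest G s (\<lambda>k. fls_const (rr G s F g a k) * g k) (Suc a) - dse_sum G s F $ 1 $ Suc a)"

lemma rr_stable: "k \<le> a \<Longrightarrow> a \<le> b \<Longrightarrow> rr G s F g b k = rr G s F g a k"
proof (induction b)
  case 0 then show ?case by simp
next
  case (Suc b)
  show ?case
  proof (cases "a = Suc b")
    case True then show ?thesis by simp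
  next
    case False
    then have "a \<le> b" using Suc by simp
    then show ?thesis using Suc by simp
  qed
qed


lemma of_int_fps_nth: "((of_int z :: real fps) * p) $ i = of_int z * p $ i"
  by (metis fps_of_int fps_mult_left_const_nth)

theorem mainTheorem1:
  fixes s :: int
    and \<gamma> :: "nat \<Rightarrow> real fps"
    and G :: "real fps fps"
    and F g :: "nat \<Rightarrow> real fls"
  assumes F_pole: "\<forall>k\<ge>1. \<forall>i < -1. fls_nth (F k) i = 0"
    and \<gamma>_const: "\<forall>n\<ge>1. \<gamma> n $ 0 = 0"
    and \<gamma>_fin: "\<forall>a. finite {n. \<gamma> n $ a \<noteq> 0}"
    and G_form: "G = Abs_fps (\<lambda>n. if n = 0 then 1 else of_int (sgn s) * \<gamma> n)"
    and DSE: "G = 1 + of_int (sgn s) * dse_sum G s F"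
    and g_form: "\<forall>k\<ge>1. fls_nth (g k) (-1) = 1 \<and> (\<forall>i < -1. fls_nth (g k) i = 0)"
  shows "\<exists>r :: nat \<Rightarrow> real.
           dse_sum G s F = dse_sum G s (\<lambda>k. fls_const (r k) * g k) \<and>
           (\<forall>r' :: nat \<Rightarrow> real.
              dse_sum G s F = dse_sum G s (\<lambda>k. fls_const (r' k) * g k) \<longrightarrow>
              (\<forall>k\<ge>1. r' k = r k))"
proof -
  have Gnth: "G $ n = (if n = 0 then 1 else of_int (sgn s) * \<gamma> n)" for n
    using G_form by simp
  have lG: "lone G" unfolding lone_def
  proof
    fix n show "G$n$0 = (if n = 0 then 1 else 0)"
      using \<gamma>_const by (cases "n = 0") (auto simp: Gnth of_int_fps_nth)
  qed
  have fG: "lfin G" unfolding lfin_def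
  proof
    fix a
    define S where "S = insert 0 (\<Union>i\<in>{..a}. {n. \<gamma> n $ i \<noteq> 0})"
    have "finite S" unfolding S_def using \<gamma>_fin by auto
    then obtain N where N: "\<forall>n\<in>S. n < N" using finite_nat_set_iff_bounded by blast
    have "\<forall>n\<ge>N. \<forall>i\<le>a. G$n$i = 0"
    proof (intro allI impI)
      fix n i assume n: "n \<ge> N" and i: "i \<le> a"
      then have "n \<notin> S" using N by auto
      then have "n \<noteq> 0" "\<gamma> n $ i = 0" using i by (auto simp: S_def)
      then show "G$n$i = 0" by (simp add: Gnth of_int_fps_nth)
    qed
    then show "\<exists>N. \<forall>n\<ge>N. \<forall>i\<le>a. G$n$i = 0" by blast
  qed
  have G0: "G $ 0 = 1" by (simp add: Gnth)
  have "fps_deriv G = fps_deriv (1 + of_int (sgn s) * dse_sum G s F)"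
    using DSE by (rule arg_cong)
  then have DG: "fps_deriv G = of_int (sgn s) * Mop F (Uf G s)"
    by (simp add: deriv_of_int_mult DA[OF lG fG])
  have rge: "fps_deriv G = EE (G$1) s G" by (rule RGE[OF lG fG G0 DG])
  have res: "fls_nth (fls_const (q k) * g k) (-1) = q k" if "k \<ge> 1" for q :: "nat \<Rightarrow> real" and k
    using g_form that by simp
  define r where "r k = rr G s F g k k" for k
  have match: "dse_sum G s (\<lambda>k. fls_const (r k) * g k) $ 1 = dse_sum G s F $ 1"
  proof (intro fps_ext)
    fix a
    show "dse_sum G s (\<lambda>k. fls_const (r k) * g k) $ 1 $ a = dse_sum G s F $ 1 $ a"
    proof (cases a)
      case 0 then show ?thesis by (simp add: dse_sum_nth)
    next
      case (Suc a')
      have "rest G s (\<lambda>k. fls_const (r k) * g k) a = rest G s (\<lambda>k. fls_const (rr G s F g a' k) * g k) a"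
      proof (rule rest_cong)
        fix k assume "1 \<le> k" "k < a"
        then have "rr G s F g a' k = rr G s F g k k" using Suc by (intro rr_stable) auto
        then show "fls_const (r k) * g k = fls_const (rr G s F g a' k) * g k" by (simp add: r_def)
      qed
      moreover have "r a = rest G s (\<lambda>k. fls_const (rr G s F g a' k) * g k) a - dse_sum G s F $ 1 $ a"
        using Suc by (simp add: r_def)
      moreover have "fls_nth (g a) (-1) = 1" using g_form Suc by simp
      ultimately show ?thesis
        using A1_split[OF lG fG, of a s "\<lambda>k. fls_const (r k) * g k"] Suc by simp
    qed
  qed
  have eq: "dse_sum G s F = dse_sum G s (\<lambda>k. fls_const (r k) * g k)"
    by (rule main_flow[OF lG fG rge]) (use match in simp)
  show ?thesis
  proof (intro exI conjI allI impI)
    show "dse_sum G s F = dse_sum G s (\<lambda>k. fls_const (r k) * g k)" by (rule eq)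
  next
    fix r' :: "nat \<Rightarrow> real" and k :: nat
    assume h: "dse_sum G s F = dse_sum G s (\<lambda>k. fls_const (r' k) * g k)" and k: "1 \<le> k"
    have E: "dse_sum G s (\<lambda>k. fls_const (r' k) * g k) = dse_sum G s (\<lambda>k. fls_const (r k) * g k)"
      using h eq by simp
    have "1 \<le> a \<longrightarrow> r' a = r a" for a
    proof (induction a rule: less_induct)
      case (less a)
      show ?case
      proof
        assume a: "1 \<le> a"
        have "rest G s (\<lambda>k. fls_const (r' k) * g k) a = rest G s (\<lambda>k. fls_const (r k) * g k) a"
          by (rule rest_cong) (use less in simp)
        moreover have "dse_sum G s (\<lambda>k. fls_const (r' k) * g k) $ 1 $ a = dse_sum G s (\<lambda>k. fls_const (r k) * g k) $ 1 $ a"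
          using E by simp
        moreover have "fls_nth (g a) (-1) = 1" using g_form a by simp
        ultimately show "r' a = r a"
          using A1_split[OF lG fG a, of s "\<lambda>k. fls_const (r' k) * g k"]
                A1_split[OF lG fG a, of s "\<lambda>k. fls_const (r k) * g k"] by simp
      qed
    qed
    then show "r' k = r k" using k by blast
  qed
qed

end
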